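(* Let $f:\mathbb{N}\to\mathbb{R}$ be non-decreasing with $f(n)>28$ for all $n$, and $p=f(n)\log n/n$. Let $Y=\sum_{i=1}^{n/7}X_i$, where the $X_i$ are independent and $X_i\sim\mathrm{Geom}(1-(1-p)^i)$. Then for every $\varepsilon>0$, $$\mathbb{P}\Big((1-\varepsilon)\Big(\frac n7+\frac n{f(n)}\Big)<Y<(1+\varepsilon)\Big(\frac n7+\frac n{f(n)}\Big)\Big)\longrightarrow 1\quad\text{as }n\to\infty.$$
   Context: $\mathrm{Geom}(q)$ denotes the geometric distribution on $\{1,2,3,\dots\}$ with success probability $q$, i.e. $\mathbb{P}(X=k)=(1-q)^{k-1}q$ (number of trials up to and including the first success). The upper summation limit $n/7$ is understood as an integer (e.g. $\lfloor n/7\rfloor$). *)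

theory Defs
  imports "HOL-Probability.Probability"
begin

text \<open>Geom(q) on {1,2,3,...}: number of trials up to and including the first success.
  The library's geometric_pmf counts failures (support {0,1,...}), so we shift by one.\<close>
definition geom1_pmf :: "real \<Rightarrow> nat pmf" where
  "geom1_pmf q = map_pmf Suc (geometric_pmf q)"

fun geom_sum_pmf :: "real \<Rightarrow> nat \<Rightarrow> nat pmf" where
  "geom_sum_pmf p 0 = return_pmf 0"
| "geom_sum_pmf p (Suc m) =
     bind_pmf (geom_sum_pmf p m) (\<lambda>s.
     bind_pmf (geom1_pmf (1 - (1 - p) ^ Suc m)) (\<lambda>x. return_pmf (s + x)))"

end

theory Submission
  imports Defs "HOL-Real_Asymp.Real_Asymp"
begin


lemma sq_summable:
  fixes c :: real assumes "0 \<le> c" "c < 1"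
  shows "summable (\<lambda>n. c^n * real (Suc n)^2)"
proof -
  define d where "d = sqrt c"
  have d: "0 \<le> d" "d < 1" using assms by (auto simp: d_def real_sqrt_lt_1_iff)
  have cd: "c = d^2" using assms by (simp add: d_def)
  have s1: "summable (\<lambda>n. d^n * real n)"
    using geometric_sums_times_n[of d] d by (auto simp: sums_iff)
  have s2: "summable (\<lambda>n. d^n)" using d by (intro summable_geometric) auto
  have sh: "summable (\<lambda>n. d^n * real (Suc n))"
    using summable_add[OF s1 s2] by (simp add: algebra_simps)
  hence "(\<lambda>n. d^n * real (Suc n)) \<longlonglongrightarrow> 0" by (rule summable_LIMSEQ_zero)
  hence "eventually (\<lambda>n. norm (d^n * real (Suc n)) < 1) sequentially"
    by (rule order_tendstoD(2)[OF tendsto_norm_zero]) simp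
  then obtain N where N: "\<And>n. n \<ge> N \<Longrightarrow> norm (d^n * real (Suc n)) < 1"
    by (auto simp: eventually_sequentially)
  show ?thesis
  proof (rule summable_comparison_test'[OF sh])
    fix n assume "n \<ge> N"
    with N have h: "d^n * real (Suc n) < 1" using d by auto
    have nn: "0 \<le> d^n * real (Suc n)" using d by auto
    have "norm (c^n * real (Suc n)^2) = (d^n * real (Suc n)) * (d^n * real (Suc n))"
      using d by (simp add: cd power2_eq_square power_mult_distrib[symmetric] power_mult[symmetric] mult.commute mult.left_commute)
    also have "\<dots> \<le> 1 * (d^n * real (Suc n))"
      using h nn by (intro mult_right_mono) auto
    finally show "norm (c^n * real (Suc n)^2) \<le> d^n * real (Suc n)" by simp
  qed
qed

lemma geom_sums:
  fixes q :: real assumes q: "0 < q" "q \<le> 1"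
  shows "(\<lambda>n. (1-q)^n * q * real (Suc n)) sums (1/q)"
    and "(\<lambda>n. (1-q)^n * q * real (Suc n)^2) sums ((2-q)/q^2)"
proof -
  define c where "c = 1 - q"
  have c: "0 \<le> c" "c < 1" using q by (auto simp: c_def)
  have s0: "(\<lambda>n. c^n) sums (1/q)" using geometric_sums[of c] c by (simp add: c_def)
  have s1: "(\<lambda>n. c^n * real n) sums (c/q^2)"
    using geometric_sums_times_n[of c] c by (simp add: c_def)
  have s1': "(\<lambda>n. c^n * real (Suc n)) sums (1/q^2)"
  proof -
    have "(\<lambda>n. c^n * real n + c^n) sums (c/q^2 + 1/q)" by (intro sums_add s1 s0)
    moreover have "c/q^2 + 1/q = 1/q^2" using q by (simp add: c_def field_simps power2_eq_square)
    ultimately show ?thesis by (simp add: algebra_simps)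
  qed
  have sT: "summable (\<lambda>n. c^n * real (Suc n)^2)" by (rule sq_summable[OF c])
  define T where "T = (\<Sum>n. c^n * real (Suc n)^2)"
  have T: "(\<lambda>n. c^n * real (Suc n)^2) sums T" using sT by (simp add: T_def summable_sums)
  have A: "(\<lambda>n. c^(Suc n) * real (Suc (Suc n))^2) sums (T - 1)"
    using T by (subst sums_Suc_iff) simp
  have B: "(\<lambda>n. c * (c^n * real (Suc n)^2 + 2 * (c^n * real (Suc n)) + c^n)) sums (c * (T + 2 * (1/q^2) + 1/q))"
    by (intro sums_mult sums_add T s0 sums_mult s1')
  have "(\<lambda>n. c^(Suc n) * real (Suc (Suc n))^2) = (\<lambda>n. c * (c^n * real (Suc n)^2 + 2 * (c^n * real (Suc n)) + c^n))"
    by (rule ext) (simp add: algebra_simps power2_eq_square)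
  with A B have "T - 1 = c * (T + 2 * (1/q^2) + 1/q)" using sums_unique2 by metis
  hence "q * T = 1 + (1 - q) * (2/q^2 + 1/q)" by (simp add: c_def algebra_simps)
  also have "\<dots> = (2-q)/q^2" using q by (simp add: field_simps power2_eq_square)
  finally have qT: "q * T = (2-q)/q^2" .
  show "(\<lambda>n. (1-q)^n * q * real (Suc n)) sums (1/q)"
    using sums_mult[OF s1', of q] q by (simp add: c_def power2_eq_square mult_ac)
  show "(\<lambda>n. (1-q)^n * q * real (Suc n)^2) sums ((2-q)/q^2)"
    using sums_mult[OF T, of q] qT by (simp add: c_def mult_ac)
qed


lemma geom1_nn:
  fixes q :: real and h :: "nat \<Rightarrow> real" assumes q: "0 < q" "q \<le> 1"
    and hs: "(\<lambda>n. (1-q)^n * q * h (Suc n)) sums s" and h0: "\<And>n. 0 \<le> h n"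
  shows "(\<integral>\<^sup>+x. ennreal (h x) \<partial>geom1_pmf q) = ennreal s"
proof -
  have nn: "0 \<le> (1-q)^n * q" for n using q by auto
  have "(\<integral>\<^sup>+x. ennreal (h x) \<partial>geom1_pmf q) = (\<integral>\<^sup>+n. ennreal (h (Suc n)) \<partial>geometric_pmf q)"
    by (simp only: geom1_pmf_def nn_integral_map_pmf)
  also have "\<dots> = (\<Sum>n. ennreal (pmf (geometric_pmf q) n) * ennreal (h (Suc n)))"
    by (simp only: nn_integral_measure_pmf nn_integral_count_space_nat)
  also have "\<dots> = (\<Sum>n. ennreal ((1-q)^n * q * h (Suc n)))"
  proof (rule suminf_cong)
    fix n
    have "pmf (geometric_pmf q) n = (1-q)^n * q" using q by simp
    thus "ennreal (pmf (geometric_pmf q) n) * ennreal (h (Suc n)) = ennreal ((1-q)^n * q * h (Suc n))"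
      using ennreal_mult[OF nn h0] by simp
  qed
  also have "\<dots> = ennreal s"
    by (rule suminf_ennreal_eq[OF _ hs]) (use nn h0 in simp)
  finally show ?thesis .
qed

lemma geom1_moments:
  fixes q :: real assumes q: "0 < q" "q \<le> 1"
  shows "(\<integral>\<^sup>+x. ennreal (real x) \<partial>geom1_pmf q) = ennreal (1/q)"
    and "(\<integral>\<^sup>+x. ennreal (real x ^ 2) \<partial>geom1_pmf q) = ennreal ((2-q)/q^2)"
  using geom1_nn[OF q geom_sums(1)[OF q]] geom1_nn[OF q geom_sums(2)[OF q]] by auto



lemma pmf_nn_const: "(\<integral>\<^sup>+x. c \<partial>measure_pmf (N::'a pmf)) = c"
  by (simp add: measure_pmf.emeasure_space_1)

lemma pmf_nn_add: "(\<integral>\<^sup>+x. f x + g x \<partial>measure_pmf (N::'a pmf)) = (\<integral>\<^sup>+x. f x \<partial>N) + (\<integral>\<^sup>+x. g x \<partial>N)"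
  by (rule nn_integral_add) auto

lemma pmf_nn_cmult: "(\<integral>\<^sup>+x. c * f x \<partial>measure_pmf (N::'a pmf)) = c * (\<integral>\<^sup>+x. f x \<partial>N)"
  by (rule nn_integral_cmult) auto

lemma pmf_nn_multc: "(\<integral>\<^sup>+x. f x * c \<partial>measure_pmf (N::'a pmf)) = (\<integral>\<^sup>+x. f x \<partial>N) * c"
  by (rule nn_integral_multc) auto

lemma moments_bind:
  fixes M N :: "nat pmf"
  defines "K \<equiv> bind_pmf M (\<lambda>s. bind_pmf N (\<lambda>x. return_pmf (s+x)))"
  shows "(\<integral>\<^sup>+y. ennreal (real y) \<partial>K) = (\<integral>\<^sup>+y. ennreal (real y) \<partial>M) + (\<integral>\<^sup>+y. ennreal (real y) \<partial>N)"
    and "(\<integral>\<^sup>+y. ennreal (real y ^ 2) \<partial>K) = (\<integral>\<^sup>+y. ennreal (real y ^ 2) \<partial>M)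
           + 2 * (\<integral>\<^sup>+y. ennreal (real y) \<partial>M) * (\<integral>\<^sup>+y. ennreal (real y) \<partial>N)
           + (\<integral>\<^sup>+y. ennreal (real y ^ 2) \<partial>N)"
proof -
  have e1: "ennreal (real (s+x)) = ennreal (real s) + ennreal (real x)" for s x :: nat
    by (simp only: of_nat_add ennreal_plus of_nat_0_le_iff)
  have "(\<integral>\<^sup>+y. ennreal (real y) \<partial>K) = (\<integral>\<^sup>+s. \<integral>\<^sup>+x. ennreal (real (s+x)) \<partial>N \<partial>M)"
    by (simp add: K_def)
  also have "\<dots> = (\<integral>\<^sup>+s. ennreal (real s) + (\<integral>\<^sup>+x. ennreal (real x) \<partial>N) \<partial>M)"
    by (simp only: e1 pmf_nn_add pmf_nn_const)
  also have "\<dots> = (\<integral>\<^sup>+y. ennreal (real y) \<partial>M) + (\<integral>\<^sup>+y. ennreal (real y) \<partial>N)"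
    by (simp only: pmf_nn_add pmf_nn_const)
  finally show "(\<integral>\<^sup>+y. ennreal (real y) \<partial>K) = (\<integral>\<^sup>+y. ennreal (real y) \<partial>M) + (\<integral>\<^sup>+y. ennreal (real y) \<partial>N)" .
  have e2: "ennreal (real (s+x) ^ 2) = ennreal (real s ^ 2) + 2 * ennreal (real s) * ennreal (real x) + ennreal (real x ^ 2)" for s x :: nat
  proof -
    have "real (s+x) ^ 2 = real s ^ 2 + 2 * real s * real x + real x ^ 2" by (simp add: power2_eq_square algebra_simps)
    thus ?thesis by (simp add: ennreal_plus ennreal_mult ennreal_power)
  qed
  define A where "A = (\<integral>\<^sup>+y. ennreal (real y) \<partial>N)"
  define B where "B = (\<integral>\<^sup>+y. ennreal (real y ^ 2) \<partial>N)"
  have "(\<integral>\<^sup>+y. ennreal (real y ^ 2) \<partial>K) = (\<integral>\<^sup>+s. \<integral>\<^sup>+x. ennreal (real (s+x) ^ 2) \<partial>N \<partial>M)"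
    by (simp add: K_def del: of_nat_add)
  also have "\<dots> = (\<integral>\<^sup>+s. ennreal (real s ^ 2) + 2 * ennreal (real s) * A + B \<partial>M)"
    by (simp only: e2 pmf_nn_add pmf_nn_const pmf_nn_cmult A_def B_def)
  also have "\<dots> = (\<integral>\<^sup>+y. ennreal (real y ^ 2) \<partial>M) + 2 * (\<integral>\<^sup>+y. ennreal (real y) \<partial>M) * A + B"
    by (simp only: pmf_nn_add pmf_nn_const pmf_nn_cmult pmf_nn_multc)
  finally show "(\<integral>\<^sup>+y. ennreal (real y ^ 2) \<partial>K) = (\<integral>\<^sup>+y. ennreal (real y ^ 2) \<partial>M)
           + 2 * (\<integral>\<^sup>+y. ennreal (real y) \<partial>M) * (\<integral>\<^sup>+y. ennreal (real y) \<partial>N)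
           + (\<integral>\<^sup>+y. ennreal (real y ^ 2) \<partial>N)" by (simp only: A_def B_def)
qed



definition qq :: "real \<Rightarrow> nat \<Rightarrow> real" where "qq p i = 1 - (1-p)^i"
definition mu :: "real \<Rightarrow> nat \<Rightarrow> real" where "mu p m = (\<Sum>i=1..m. 1 / qq p i)"
definition var :: "real \<Rightarrow> nat \<Rightarrow> real" where "var p m = (\<Sum>i=1..m. (1 - qq p i) / (qq p i)^2)"

lemma qq_bounds: assumes "0 < p" "p \<le> 1" "i \<ge> 1" shows "0 < qq p i" "qq p i \<le> 1"
proof -
  have "(1-p)^i \<le> (1-p)^1" using assms by (intro power_decreasing) auto
  thus "0 < qq p i" using assms by (simp add: qq_def)
  show "qq p i \<le> 1" using assms by (simp add: qq_def)
qed

lemma mu_nonneg: "0 < p \<Longrightarrow> p \<le> 1 \<Longrightarrow> 0 \<le> mu p m"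
  unfolding mu_def by (intro sum_nonneg) (use qq_bounds in fastforce)

lemma var_nonneg: "0 < p \<Longrightarrow> p \<le> 1 \<Longrightarrow> 0 \<le> var p m"
  unfolding var_def by (intro sum_nonneg) (use qq_bounds in fastforce)

lemma geom_sum_moments:
  assumes p: "0 < p" "p \<le> 1"
  shows "(\<integral>\<^sup>+y. ennreal (real y) \<partial>geom_sum_pmf p m) = ennreal (mu p m)
       \<and> (\<integral>\<^sup>+y. ennreal (real y ^ 2) \<partial>geom_sum_pmf p m) = ennreal (var p m + (mu p m)^2)"
proof (induction m)
  case 0
  then show ?case by (simp add: mu_def var_def)
next
  case (Suc m)
  define q where "q = qq p (Suc m)"
  have q: "0 < q" "q \<le> 1" using qq_bounds[OF p, of "Suc m"] by (auto simp: q_def)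
  have gq: "geom1_pmf (1 - (1 - p) ^ Suc m) = geom1_pmf q" by (simp add: q_def qq_def)
  have mus: "mu p (Suc m) = mu p m + 1/q" by (simp add: mu_def q_def)
  have vars: "var p (Suc m) = var p m + (1-q)/q^2" by (simp add: var_def q_def)
  have m0: "0 \<le> mu p m" "0 \<le> var p m" using mu_nonneg[OF p] var_nonneg[OF p] by auto
  have e: "var p m + (mu p m)^2 + 2 * mu p m * (1/q) + (2-q)/q^2 = var p (Suc m) + (mu p (Suc m))^2"
    using q by (simp add: mus vars field_simps power2_eq_square)
  have nn1: "0 \<le> var p m + (mu p m)^2" using m0 by simp
  have nn2: "0 \<le> (2-q)/q^2" using q by simp
  have nn3: "0 \<le> 2 * mu p m * (1/q)" using q m0 by simp
  show ?case
    unfolding geom_sum_pmf.simps gq moments_bind Suc.IH[THEN conjunct1] Suc.IH[THEN conjunct2]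
      geom1_moments[OF q]
  proof (intro conjI)
    show "ennreal (mu p m) + ennreal (1 / q) = ennreal (mu p (Suc m))"
      using m0 q by (simp add: mus ennreal_plus)
    have "ennreal (var p m + (mu p m)\<^sup>2) + 2 * ennreal (mu p m) * ennreal (1 / q) + ennreal ((2 - q) / q\<^sup>2)
        = ennreal (var p m + (mu p m)^2 + 2 * mu p m * (1/q) + (2-q)/q^2)"
    proof -
      have a: "ennreal (2 * mu p m * (1/q)) = 2 * ennreal (mu p m) * ennreal (1/q)"
      proof -
        have "ennreal (2 * mu p m * (1/q)) = ennreal (2 * mu p m) * ennreal (1/q)"
          by (rule ennreal_mult) (use m0 q in auto)
        also have "ennreal (2 * mu p m) = ennreal 2 * ennreal (mu p m)"
          by (rule ennreal_mult) (use m0 in auto)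
        finally show ?thesis by simp
      qed
      have b: "ennreal (var p m + (mu p m)^2 + 2 * mu p m * (1/q) + (2-q)/q^2)
          = ennreal (var p m + (mu p m)^2) + ennreal (2 * mu p m * (1/q)) + ennreal ((2-q)/q^2)"
        using nn1 nn2 nn3 by (simp only: ennreal_plus add_nonneg_nonneg)
      show ?thesis using a b by simp
    qed
    thus "ennreal (var p m + (mu p m)\<^sup>2) + 2 * ennreal (mu p m) * ennreal (1 / q) + ennreal ((2 - q) / q\<^sup>2) =
    ennreal (var p (Suc m) + (mu p (Suc m))\<^sup>2)" by (simp only: e)
  qed
qed

lemma cheb:
  assumes p: "0 < p" "p \<le> 1" and t: "t > 0"
  shows "measure_pmf.prob (geom_sum_pmf p m) {y. t \<le> \<bar>real y - mu p m\<bar>} \<le> var p m / t^2"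
proof -
  let ?M = "measure_pmf (geom_sum_pmf p m)"
  note mom = geom_sum_moments[OF p, of m]
  have i2: "integrable ?M (\<lambda>y. real y ^ 2)"
    by (rule integrableI_nonneg) (use mom in auto)
  have i1: "integrable ?M (\<lambda>y. real y)"
    by (rule integrableI_nonneg) (use mom in auto)
  have E1: "measure_pmf.expectation (geom_sum_pmf p m) real = mu p m"
    by (subst integral_eq_nn_integral) (use mom mu_nonneg[OF p] in auto)
  have E2: "measure_pmf.expectation (geom_sum_pmf p m) (\<lambda>y. real y ^ 2) = var p m + (mu p m)^2"
  proof -
    have "measure_pmf.expectation (geom_sum_pmf p m) (\<lambda>y. real y ^ 2) = enn2real (\<integral>\<^sup>+y. ennreal (real y ^ 2) \<partial>geom_sum_pmf p m)"
      by (rule integral_eq_nn_integral) auto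
    also have "\<dots> = var p m + (mu p m)^2"
      by (simp only: mom[THEN conjunct2]) (rule enn2real_ennreal, use mu_nonneg[OF p] var_nonneg[OF p] in auto)
    finally show ?thesis .
  qed
  have V: "measure_pmf.variance (geom_sum_pmf p m) real = var p m"
    using measure_pmf.variance_eq[OF i1] i2 E1 E2 by simp
  have "measure_pmf.prob (geom_sum_pmf p m) {y \<in> space ?M. t \<le> \<bar>real y - measure_pmf.expectation (geom_sum_pmf p m) real\<bar>}
        \<le> measure_pmf.variance (geom_sum_pmf p m) real / t^2"
    by (rule measure_pmf.Chebyshev_inequality) (use i2 t in auto)
  thus ?thesis using E1 V by simp
qed



lemma inv_qq_le: assumes p: "0 < p" "p \<le> 1" and i: "i \<ge> 1"
  shows "1 / qq p i \<le> 1 + 1 / (real i * p)"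
proof -
  have b: "1 + real i * p \<le> (1+p)^i" using Bernoulli_inequality[of p i] p by simp
  have "(1-p)^i * (1+p)^i = (1 - p^2)^i" by (simp add: power_mult_distrib[symmetric] power2_eq_square algebra_simps)
  also have "\<dots> \<le> 1" using p by (intro power_le_one) (auto simp: power2_eq_square mult_le_one)
  finally have a: "(1-p)^i * (1+p)^i \<le> 1" .
  have ip: "real i * p > 0" using p i by auto
  have c: "(1-p)^i * (1 + real i * p) \<le> 1"
    using a b p by (meson order.trans mult_left_mono zero_le_power diff_ge_0_iff_ge)
  have qpos: "0 < qq p i" using qq_bounds[OF p i] by simp
  have "1 \<le> qq p i * (1 + 1 / (real i * p))"
  proof -
    have gen: "\<And>c a::real. a > 0 \<Longrightarrow> (1-c)*(1+1/a) = (1-c)*(1+a)/a" by (simp add: field_simps)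
    have "qq p i * (1 + 1 / (real i * p)) = (1 - (1-p)^i) * (1 + real i * p) / (real i * p)"
      unfolding qq_def by (rule gen[OF ip])
    also have "\<dots> \<ge> 1" using c ip by (simp add: field_simps)
    finally show ?thesis .
  qed
  thus ?thesis using qpos by (simp add: field_simps)
qed

lemma qq_ge_p: assumes p: "0 < p" "p \<le> 1" and i: "i \<ge> 1" shows "p \<le> qq p i"
proof -
  have "(1-p)^i \<le> (1-p)^1" using p i by (intro power_decreasing) auto
  thus ?thesis by (simp add: qq_def)
qed

lemma harm_le_ln: "m \<ge> 1 \<Longrightarrow> harm m \<le> ln (real m) + (1::real)"
  using euler_mascheroni_sequence_decreasing[of 1 m] by (simp add: harm_def)

lemma mu_upper: assumes p: "0 < p" "p \<le> 1"
  shows "mu p m \<le> real m + harm m / p"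
proof -
  have "mu p m \<le> (\<Sum>i=1..m. 1 + inverse (real i) / p)"
    unfolding mu_def using inv_qq_le[OF p] by (intro sum_mono) (auto simp: field_simps)
  also have "\<dots> = real m + harm m / p"
    by (simp add: sum.distrib harm_def sum_divide_distrib)
  finally show ?thesis .
qed

lemma var_upper: assumes p: "0 < p" "p \<le> 1"
  shows "var p m \<le> mu p m / p"
proof -
  have "var p m \<le> (\<Sum>i=1..m. (1 / qq p i) / p)"
    unfolding var_def
  proof (intro sum_mono)
    fix i assume "i \<in> {1..m}"
    hence i: "i \<ge> 1" by auto
    have q: "0 < qq p i" "qq p i \<le> 1" "p \<le> qq p i" using qq_bounds[OF p i] qq_ge_p[OF p i] by auto
    have "(1 - qq p i) / (qq p i)^2 \<le> 1 / (qq p i)^2" using q by (intro divide_right_mono) auto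
    also have "\<dots> = (1 / qq p i) / qq p i" by (simp add: power2_eq_square)
    also have "\<dots> \<le> (1 / qq p i) / p" using q p by (intro divide_left_mono) auto
    finally show "(1 - qq p i) / (qq p i)^2 \<le> (1 / qq p i) / p" .
  qed
  also have "\<dots> = mu p m / p" by (simp add: mu_def sum_divide_distrib)
  finally show ?thesis .
qed

lemma mu_lower: assumes p: "0 < p" "p \<le> 1" and L: "L \<le> m" "real L * p \<le> 1"
  shows "real m + (1 - real L * p) * ln (real L + 1) / p \<le> mu p m"
proof -
  have "mu p m - real m = (\<Sum>i=1..m. 1 / qq p i - 1)" by (simp add: mu_def sum_subtractf)
  also have "\<dots> \<ge> (\<Sum>i=1..L. 1 / qq p i - 1)"
  proof (rule sum_mono2)
    fix b assume "b \<in> {1..m} - {1..L}"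
    hence "b \<ge> 1" by auto
    thus "0 \<le> 1 / qq p b - 1"
      using qq_bounds[OF p] by (auto simp: field_simps)
  qed (use L in auto)
  also have "(\<Sum>i=1..L. 1 / qq p i - 1) \<ge> (\<Sum>i=1..L. (1 - real L * p) * (inverse (real i) / p))"
  proof (intro sum_mono)
    fix i assume "i \<in> {1..L}"
    hence i: "i \<ge> 1" "i \<le> L" by auto
    have q: "0 < qq p i" "qq p i \<le> 1" using qq_bounds[OF p i(1)] by auto
    have b: "1 - real i * p \<le> (1-p)^i" using Bernoulli_inequality[of "-p" i] p by simp
    have ip: "0 < real i * p" using i p by auto
    have iL: "real i * p \<le> real L * p" using i p by (intro mult_right_mono) auto
    have qle: "qq p i \<le> real i * p" using b by (simp add: qq_def)
    have "(1 - real L * p) * (inverse (real i) / p) = (1 - real L * p) / (real i * p)"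
      by (simp add: field_simps)
    also have "\<dots> \<le> (1 - real i * p) / (real i * p)" using iL ip by (intro divide_right_mono) auto
    also have "\<dots> \<le> (1 - real i * p) / qq p i"
      using qle q iL L(2) by (intro divide_left_mono) (auto simp: mult_pos_pos)
    also have "\<dots> \<le> (1 - qq p i) / qq p i" using b q by (intro divide_right_mono) (auto simp: qq_def)
    also have "\<dots> = 1 / qq p i - 1" using q by (simp add: field_simps)
    finally show "(1 - real L * p) * (inverse (real i) / p) \<le> 1 / qq p i - 1" .
  qed
  also have "(\<Sum>i=1..L. (1 - real L * p) * (inverse (real i) / p)) = (1 - real L * p) * harm L / p"
    by (simp add: harm_def sum_distrib_left sum_divide_distrib)
  also have "\<dots> \<ge> (1 - real L * p) * ln (real L + 1) / p"
    using ln_le_harm[of L] L p by (intro divide_right_mono mult_left_mono) auto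
  finally show ?thesis by simp
qed



lemma mu_ge_m: assumes p: "0 < p" "p \<le> 1" shows "real m \<le> mu p m"
  using mu_lower[OF p, of 0 m] by simp

lemma core:
  fixes n :: nat and F \<epsilon> :: real
  assumes F: "F > 28" and eps: "\<epsilon> > 0"
    and n56: "real n \<ge> 56" and ln3: "ln (real n) \<ge> 3"
    and h2: "1 / ln (real n) \<le> \<epsilon>/2"
    and h3: "28/\<epsilon> \<le> real n"
    and h4: "(28/\<epsilon> + 2 * ln (ln (real n))) / ln (real n) \<le> min \<epsilon> 1"
    and p1: "F * ln (real n) / real n \<le> 1"
  shows "1 - 1 / (28 * (\<epsilon>/14)^2 * ln (real n)) \<le> measure_pmf.prob (geom_sum_pmf (F * ln (real n) / real n) (n div 7))
            {y. (1 - \<epsilon>) * (real n / 7 + real n / F) < real y \<and>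
                real y < (1 + \<epsilon>) * (real n / 7 + real n / F)}"
proof -
  define N where "N = real n"
  define l where "l = ln N"
  define p where "p = F * l / N"
  define m where "m = n div 7"
  define t where "t = \<epsilon> / 14 * N"
  define W where "W = N/7 + N/F"
  have N: "N \<ge> 56" using n56 by (simp add: N_def)
  have l: "l \<ge> 3" using ln3 by (simp add: l_def N_def)
  have p: "0 < p" "p \<le> 1" using F N l p1 by (auto simp: p_def l_def N_def)
  have ip: "1 / p = N / (F * l)" by (simp add: p_def)
  have t: "t > 0" using eps N by (simp add: t_def)
  have epsN: "\<epsilon> * N \<ge> 28" using h3 eps by (simp add: N_def field_simps)
  have mle: "real m \<le> N / 7" unfolding m_def N_def by linarith
  have mge: "real m \<ge> N / 7 - 1" unfolding m_def N_def by linarith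
  have m1: "m \<ge> 1" using mge N by linarith
  define \<mu> where "\<mu> = mu p m"
  define V where "V = var p m"
  have harm: "harm m \<le> l + 1"
  proof -
    have "harm m \<le> ln (real m) + (1::real)" by (rule harm_le_ln[OF m1])
    also have "ln (real m) \<le> l" unfolding l_def using m1 mle N by (subst ln_le_cancel_iff) auto
    finally show ?thesis by simp
  qed
  have lp1: "(l + 1) / p = N / F + N / (F * l)" using l F N by (simp add: p_def field_simps)
  have NFl: "N / (F * l) \<le> N / (28 * l)" using F l N by (intro divide_left_mono mult_right_mono) auto
  have NF: "N / F \<le> N / 28" using F N by (intro divide_left_mono) auto
  have muU: "\<mu> \<le> N/7 + N/F + N/(28 * l)"
  proof -
    have "\<mu> \<le> real m + harm m / p" unfolding \<mu>_def by (rule mu_upper[OF p])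
    also have "harm m / p \<le> (l + 1) / p" using harm p by (intro divide_right_mono) auto
    finally show ?thesis using lp1 NFl mle by linarith
  qed
  have muN: "\<mu> \<le> N"
  proof -
    have "N / (28 * l) \<le> N / 28" using l N by (intro divide_left_mono) auto
    thus ?thesis using muU NF N by linarith
  qed
  have mu0: "0 \<le> \<mu>" unfolding \<mu>_def by (rule mu_nonneg[OF p])
  have VU: "V / t^2 \<le> 1 / (28 * (\<epsilon>/14)^2 * l)"
  proof -
    have "V \<le> \<mu> / p" unfolding V_def \<mu>_def by (rule var_upper[OF p])
    also have "\<dots> = \<mu> * (1 / p)" by simp
    also have "\<dots> = \<mu> * (N / (F * l))" by (simp only: ip)
    also have "\<dots> \<le> N * (N / (28 * l))" using muN mu0 NFl F l N by (intro mult_mono) auto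
    finally have V: "V \<le> N * (N / (28 * l))" .
    have "V / t^2 \<le> N * (N / (28 * l)) / t^2" using V by (intro divide_right_mono) auto
    also have "\<dots> = 1 / (28 * (\<epsilon>/14)^2 * l)" using N l eps by (simp add: t_def field_simps power2_eq_square)
    finally show ?thesis .
  qed
  have upper: "\<mu> + t \<le> (1 + \<epsilon>) * W"
  proof -
    have "N / (28 * l) = (1 / l) * N / 28" by simp
    also have "\<dots> \<le> (\<epsilon>/2) * N / 28" using h2 N by (intro divide_right_mono mult_right_mono) (auto simp: l_def N_def)
    finally have a: "N / (28 * l) \<le> \<epsilon> * N / 56" by simp
    have b: "0 \<le> \<epsilon> * (N / F)" using eps F N by auto
    have c: "(1 + \<epsilon>) * W = N/7 + N/F + \<epsilon> * N / 7 + \<epsilon> * (N / F)" by (simp add: W_def algebra_simps add_divide_distrib)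
    have d: "t = \<epsilon> * N / 14" by (simp add: t_def)
    have e: "\<epsilon> * N \<ge> 0" using eps N by simp
    show ?thesis unfolding c d using muU a b e by linarith
  qed
  have lower: "(1 - \<epsilon>) * W \<le> \<mu> - t"
  proof -
    have d: "t = \<epsilon> * N / 14" by (simp add: t_def)
    have f: "(1-\<epsilon>)*(N/7) = N/7 - \<epsilon> * N / 7" by (simp add: left_diff_distrib)
    have W1: "(1 - \<epsilon>) * W \<le> (1 - \<epsilon>) * (N/7) + N/F"
    proof -
      have "(1-\<epsilon>)*W = (1-\<epsilon>)*(N/7) + (1-\<epsilon>)*(N/F)" by (simp add: W_def distrib_left)
      moreover have "(1-\<epsilon>)*(N/F) = N/F - \<epsilon>*(N/F)" by (simp only: left_diff_distrib mult_1_left)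
      moreover have "\<epsilon>*(N/F) \<ge> 0" using eps F N by simp
      ultimately show ?thesis by linarith
    qed
    show ?thesis
    proof (cases "F \<ge> 28 / \<epsilon>")
      case True
      have "N / F \<le> N / (28/\<epsilon>)" using True eps N F by (intro divide_left_mono) auto
      hence "N / F \<le> \<epsilon> * N / 28" by (simp add: mult.commute)
      moreover have "real m \<le> \<mu>" unfolding \<mu>_def by (rule mu_ge_m[OF p])
      ultimately show ?thesis unfolding d using W1 mge epsN f by linarith
    next
      case False
      hence FK: "F < 28 / \<epsilon>" by simp
      define x where "x = N / l^2"
      define L where "L = nat \<lfloor>x\<rfloor>"
      have x0: "x > 0" using N l by (simp add: x_def)
      have LL: "real L = real_of_int \<lfloor>x\<rfloor>" using x0 by (simp add: L_def)
      have Lx: "real L \<le> x" "x < real L + 1" unfolding LL by linarith+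
      have x9: "x \<le> N / 9"
      proof -
        have "3 * 3 \<le> l * l" using l by (intro mult_mono) auto
        hence "9 \<le> l^2" by (simp add: power2_eq_square)
        hence "N / l^2 \<le> N / 9" using N by (intro divide_left_mono) auto
        thus ?thesis by (simp add: x_def)
      qed
      have Lm: "L \<le> m" using Lx x9 mge N by linarith
      define a where "a = (28/\<epsilon>) / l"
      define b where "b = 2 * ln l / l"
      have lnl: "ln l \<ge> 0" using l by simp
      have a0: "a \<ge> 0" "b \<ge> 0" using eps l lnl by (auto simp: a_def b_def)
      have ab: "a + b \<le> \<epsilon>" "a + b \<le> 1" using h4 by (auto simp: a_def b_def l_def N_def add_divide_distrib)
      have xp: "x * p = F / l" using N l by (simp add: x_def p_def power2_eq_square field_simps)
      have Lp: "real L * p \<le> a"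
      proof -
        have "real L * p \<le> x * p" using Lx p by (intro mult_right_mono) auto
        also have "\<dots> \<le> a" unfolding xp a_def using FK l by (intro divide_right_mono) auto
        finally show ?thesis .
      qed
      have Lp1: "real L * p \<le> 1" using Lp ab a0 by linarith
      have muL: "real m + (1 - real L * p) * ln (real L + 1) / p \<le> \<mu>" unfolding \<mu>_def by (rule mu_lower[OF p Lm Lp1])
      have lnx: "ln x = l - 2 * ln l"
      proof -
        have "ln x = ln N - ln (l^2)" unfolding x_def using N l by (intro ln_divide_pos) auto
        also have "ln (l^2) = 2 * ln l" using l by (simp add: ln_realpow)
        finally show ?thesis by (simp add: l_def)
      qed
      have lnL: "ln x \<le> ln (real L + 1)" using Lx x0 by simp
      have lnL0: "0 \<le> ln (real L + 1)" by simp
      have "(1 - a) * ln x \<le> (1 - real L * p) * ln (real L + 1)"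
      proof -
        have "(1 - a) * ln x \<le> (1 - a) * ln (real L + 1)" using ab a0 lnL by (intro mult_left_mono) auto
        also have "\<dots> \<le> (1 - real L * p) * ln (real L + 1)" using Lp lnL0 by (intro mult_right_mono) auto
        finally show ?thesis .
      qed
      hence "(1 - a) * ln x / p \<le> (1 - real L * p) * ln (real L + 1) / p" using p by (intro divide_right_mono) auto
      moreover have "(1 - a) * ln x / p = (1 - a) * (1 - b) * (N / F)"
      proof -
        have "ln x / p = (l - 2 * ln l) * (1 / p)" using lnx by simp
        also have "\<dots> = (l - 2 * ln l) * (N / (F * l))" by (simp only: ip)
        also have "\<dots> = (1 - b) * (N / F)" using l F by (simp add: b_def field_simps)
        finally show ?thesis by (metis mult.assoc times_divide_eq_right)
      qed
      moreover have "(1 - a) * (1 - b) \<ge> 1 - \<epsilon>"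
      proof -
        have "a * b \<ge> 0" using a0 by simp
        hence "(1 - a) * (1 - b) \<ge> 1 - (a + b)" by (simp add: algebra_simps)
        thus ?thesis using ab by linarith
      qed
      moreover have "(1 - a) * (1 - b) * (N / F) \<ge> (1 - \<epsilon>) * (N / F)"
        using calculation(3) F N by (intro mult_right_mono) auto
      moreover have "(1 - \<epsilon>) * (N / F) \<ge> N / F - \<epsilon> * N / 28"
      proof -
        have "(1-\<epsilon>)*(N/F) = N/F - \<epsilon>*(N/F)" by (simp only: left_diff_distrib mult_1_left)
        moreover have "\<epsilon>*(N/F) \<le> \<epsilon>*(N/28)" using NF eps by (intro mult_left_mono) auto
        ultimately show ?thesis by simp
      qed
      ultimately have "\<mu> \<ge> real m + N / F - \<epsilon> * N / 28" using muL by linarith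
      thus ?thesis unfolding d using W1 mge epsN f by linarith
    qed
  qed
  let ?Y = "geom_sum_pmf p m"
  define S where "S = {y::nat. (1 - \<epsilon>) * W < real y \<and> real y < (1 + \<epsilon>) * W}"
  define T where "T = {y::nat. t \<le> \<bar>real y - \<mu>\<bar>}"
  have sub: "UNIV - T \<subseteq> S" using upper lower by (auto simp: S_def T_def abs_if split: if_splits)
  have PT: "measure_pmf.prob ?Y T \<le> V / t^2" unfolding T_def \<mu>_def V_def by (rule cheb[OF p t])
  have "1 - measure_pmf.prob ?Y T = measure_pmf.prob ?Y (UNIV - T)"
    using measure_pmf.prob_compl[of T ?Y] by simp
  also have "\<dots> \<le> measure_pmf.prob ?Y S" using sub by (intro measure_pmf.finite_measure_mono) auto
  finally have "1 - V/t^2 \<le> measure_pmf.prob ?Y S" using PT by linarith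
  hence "1 - 1 / (28 * (\<epsilon>/14)^2 * l) \<le> measure_pmf.prob ?Y S" using VU by linarith
  thus ?thesis by (simp add: S_def W_def p_def m_def N_def l_def)
qed



theorem lemma3:
  fixes f :: "nat \<Rightarrow> real"
  assumes mono_f: "mono f"
    and f_gt: "\<And>n. f n > 28"
    and p_le_1: "eventually (\<lambda>n. f n * ln (real n) / real n \<le> 1) sequentially"
    and eps: "\<epsilon> > 0"
  shows "(\<lambda>n. measure_pmf.prob (geom_sum_pmf (f n * ln (real n) / real n) (n div 7))
            {y. (1 - \<epsilon>) * (real n / 7 + real n / f n) < real y \<and>
                real y < (1 + \<epsilon>) * (real n / 7 + real n / f n)})
         \<longlonglongrightarrow> 1"
proof -
  define c where "c = 28 * (\<epsilon>/14)^2"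
  have ev1: "eventually (\<lambda>n. real n \<ge> 56) sequentially" by real_asymp
  have ev2: "eventually (\<lambda>n. ln (real n) \<ge> 3) sequentially" by real_asymp
  have l0: "(\<lambda>n. 1 / ln (real n)) \<longlonglongrightarrow> 0" by real_asymp
  have ev3: "eventually (\<lambda>n. 1 / ln (real n) < \<epsilon>/2) sequentially"
    by (rule order_tendstoD(2)[OF l0]) (use eps in simp)
  obtain N0 :: nat where N0: "28/\<epsilon> \<le> real N0" using real_arch_simple by blast
  have ev4: "eventually (\<lambda>n. 28/\<epsilon> \<le> real n) sequentially"
    unfolding eventually_sequentially using N0 by (intro exI[of _ N0]) auto
  have l5: "(\<lambda>n. (28/\<epsilon> + 2 * ln (ln (real n))) / ln (real n)) \<longlonglongrightarrow> 0" by real_asymp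
  have ev5: "eventually (\<lambda>n. (28/\<epsilon> + 2 * ln (ln (real n))) / ln (real n) < min \<epsilon> 1) sequentially"
    by (rule order_tendstoD(2)[OF l5]) (use eps in simp)
  have lowlim: "(\<lambda>n. 1 - 1 / (c * ln (real n))) \<longlonglongrightarrow> 1"
  proof -
    have "(\<lambda>n. (1/c) * (1 / ln (real n))) \<longlonglongrightarrow> (1/c) * 0" by (intro tendsto_mult tendsto_const l0)
    hence "(\<lambda>n. 1 - (1/c) * (1 / ln (real n))) \<longlonglongrightarrow> 1 - 0" by (intro tendsto_diff tendsto_const) simp
    thus ?thesis by simp
  qed
  have evlow: "eventually (\<lambda>n. 1 - 1 / (c * ln (real n)) \<le> measure_pmf.prob (geom_sum_pmf (f n * ln (real n) / real n) (n div 7))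
            {y. (1 - \<epsilon>) * (real n / 7 + real n / f n) < real y \<and>
                real y < (1 + \<epsilon>) * (real n / 7 + real n / f n)}) sequentially"
    using ev1 ev2 ev3 ev4 ev5 p_le_1
  proof eventually_elim
    case (elim n)
    show ?case unfolding c_def
      by (rule core[OF f_gt eps]) (use elim in auto)
  qed
  have evup: "eventually (\<lambda>n. measure_pmf.prob (geom_sum_pmf (f n * ln (real n) / real n) (n div 7))
            {y. (1 - \<epsilon>) * (real n / 7 + real n / f n) < real y \<and>
                real y < (1 + \<epsilon>) * (real n / 7 + real n / f n)} \<le> 1) sequentially"
    by (intro always_eventually allI measure_pmf.prob_le_1)
  show ?thesis by (rule tendsto_sandwich[OF evlow evup lowlim tendsto_const])
qed

end
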